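(* Let $T$ be a bounded linear operator on a complex Hilbert space. If $\mathcal{N}(T^* )\subseteq\mathcal{N}(T)$ and $T^n$ is hyponormal for some positive integer $n$, then $\mathcal{N}(T^m)=\mathcal{N}(T^{*m})$ for every positive integer $m$.
   Context: $\mathcal{N}(A)$ denotes the kernel of $A$. An operator $A$ is hyponormal if $AA^*\le A^*A$. *)

theory Defs
  imports "HOL-Analysis.Analysis" "HOL-Library.Complex_Order"
begin

text \<open>The distribution has no complex inner-product spaces, so we introduce them
as type classes: a complex vector space structure on top of a real vector space,
a complex inner product (linear in the second argument, conjugate-linear in the
first) inducing the norm, and completeness.\<close>

class complex_vector = real_vector +
  fixes scaleC :: "complex \<Rightarrow> 'a \<Rightarrow> 'a"
  assumes scaleC_add_right: "scaleC a (x + y) = scaleC a x + scaleC a y"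
    and scaleC_add_left: "scaleC (a + b) x = scaleC a x + scaleC b x"
    and scaleC_scaleC: "scaleC a (scaleC b x) = scaleC (a * b) x"
    and scaleC_one: "scaleC 1 x = x"
    and scaleR_scaleC: "scaleR r x = scaleC (complex_of_real r) x"

class complex_inner = complex_vector + real_normed_vector +
  fixes cinner :: "'a \<Rightarrow> 'a \<Rightarrow> complex"
  assumes cinner_conj: "cinner x y = cnj (cinner y x)"
    and cinner_add_right: "cinner x (y + z) = cinner x y + cinner x z"
    and cinner_scaleC_right: "cinner x (scaleC r y) = r * cinner x y"
    and cinner_ge_zero: "0 \<le> cinner x x"
    and cinner_eq_zero_iff: "cinner x x = 0 \<longleftrightarrow> x = 0"
    and norm_eq_sqrt_cinner: "norm x = sqrt (Re (cinner x x))"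

class chilbert_space = complex_inner + complete_space

definition bounded_clinear :: "('a::complex_inner \<Rightarrow> 'b::complex_inner) \<Rightarrow> bool" where
  "bounded_clinear T \<longleftrightarrow>
     (\<forall>x y. T (x + y) = T x + T y) \<and> (\<forall>c x. T (scaleC c x) = scaleC c (T x)) \<and>
     (\<exists>K. \<forall>x. norm (T x) \<le> norm x * K)"

definition adjoint_of :: "('a::complex_inner \<Rightarrow> 'a) \<Rightarrow> ('a \<Rightarrow> 'a) \<Rightarrow> bool" where
  "adjoint_of T S \<longleftrightarrow> (\<forall>x y. cinner (T x) y = cinner x (S y))"

text \<open>Operator order: A \<le> B iff B - A is positive, i.e. <x,Ax> \<le> <x,Bx> for all x
(in the partial order of complex numbers: real parts ordered, imaginary parts equal).\<close>
definition op_le :: "('a::complex_inner \<Rightarrow> 'a) \<Rightarrow> ('a \<Rightarrow> 'a) \<Rightarrow> bool" where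
  "op_le A B \<longleftrightarrow> (\<forall>x. cinner x (A x) \<le> cinner x (B x))"

definition hyponormal :: "('a::complex_inner \<Rightarrow> 'a) \<Rightarrow> bool" where
  "hyponormal A \<longleftrightarrow> (\<forall>B. adjoint_of A B \<longrightarrow> op_le (A \<circ> B) (B \<circ> A))"

definition kernel :: "('a \<Rightarrow> 'b::zero) \<Rightarrow> 'a set" where
  "kernel A = {x. A x = 0}"

end

theory Submission
  imports Defs
begin

lemma cinner_zero_right: "cinner (x::'a::complex_inner) 0 = 0"
proof -
  have "cinner x (0+0) = cinner x 0 + cinner x 0" by (rule cinner_add_right)
  then show ?thesis by simp
qed

lemma cinner_zero_left: "cinner 0 (x::'a::complex_inner) = 0"
  by (metis cinner_conj cinner_zero_right complex_cnj_zero)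

lemma adj_zero:
  assumes "adjoint_of A B"
  shows "A 0 = 0" "B 0 = 0"
proof -
  have "cinner (A 0) (A 0) = 0" using assms unfolding adjoint_of_def
    by (metis cinner_zero_left)
  then show "A 0 = 0" using cinner_eq_zero_iff by blast
  have "cinner (B 0) (B 0) = 0" using assms unfolding adjoint_of_def
    by (metis cinner_conj cinner_zero_left complex_cnj_zero)
  then show "B 0 = 0" using cinner_eq_zero_iff by blast
qed

lemma adj_swap:
  assumes "adjoint_of A B" shows "adjoint_of B A"
  using assms unfolding adjoint_of_def by (metis cinner_conj)

lemma adj_pow:
  assumes "adjoint_of A B" shows "adjoint_of (A ^^ k) (B ^^ k)"
  unfolding adjoint_of_def
proof (induction k)
  case 0 then show ?case by simp
next
  case (Suc k)
  show ?case
  proof (intro allI)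
    fix x y
    have "cinner ((A ^^ Suc k) x) y = cinner (A ((A^^k) x)) y" by simp
    also have "\<dots> = cinner ((A^^k) x) (B y)" using assms unfolding adjoint_of_def by blast
    also have "\<dots> = cinner x ((B^^k) (B y))" using Suc by blast
    also have "\<dots> = cinner x ((B ^^ Suc k) y)" by (simp add: funpow_swap1)
    finally show "cinner ((A ^^ Suc k) x) y = cinner x ((B ^^ Suc k) y)" .
  qed
qed

lemma step:
  assumes "adjoint_of A B" "kernel B \<subseteq> kernel A" "B (B x) = 0"
  shows "B x = 0"
proof -
  have "A (B x) = 0" using assms(2,3) unfolding kernel_def by blast
  then have "cinner (B x) (B x) = 0" using assms(1) unfolding adjoint_of_def
    by (metis cinner_zero_left)
  then show ?thesis using cinner_eq_zero_iff by blast
qed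

lemma pow_zero:
  fixes B :: "'a::zero \<Rightarrow> 'a"
  assumes "B 0 = 0" shows "(B ^^ k) 0 = 0"
  using assms by (induction k) simp_all

lemma kernel_pow:
  assumes "adjoint_of A B" "kernel B \<subseteq> kernel A" "k > 0"
  shows "kernel (B ^^ k) = kernel B"
proof -
  have sub: "(B ^^ Suc k) x = 0 \<Longrightarrow> B x = 0" for k x
  proof (induction k)
    case 0 then show ?case by simp
  next
    case (Suc k)
    have "B (B ((B^^k) x)) = 0" using Suc.prems by simp
    then have "B ((B^^k) x) = 0" using step[OF assms(1,2)] by blast
    then show ?case using Suc.IH by simp
  qed
  have sup: "B x = 0 \<Longrightarrow> (B ^^ k) x = 0" for x
  proof -
    assume "B x = 0"
    obtain j where j: "k = Suc j" using assms(3) gr0_implies_Suc by blast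
    have "(B ^^ k) x = (B ^^ j) (B x)" unfolding j by (simp add: funpow_swap1)
    then show ?thesis using \<open>B x = 0\<close> pow_zero[where B=B, OF adj_zero(2)[OF assms(1)]] by simp
  qed
  obtain j where j: "k = Suc j" using assms(3) gr0_implies_Suc by blast
  show ?thesis unfolding kernel_def using sub[of j] sup j by (auto simp del: funpow.simps simp add: funpow_Suc_right)
qed

lemma hypo_kernel:
  assumes "adjoint_of A B" "hyponormal A" "A x = 0"
  shows "B x = 0"
proof -
  have "cinner x (A (B x)) \<le> cinner x (B (A x))"
    using assms(1,2) unfolding hyponormal_def op_le_def by auto
  moreover have "cinner x (A (B x)) = cinner (B x) (B x)"
    using assms(1) unfolding adjoint_of_def by (metis cinner_conj)
  moreover have "cinner x (B (A x)) = cinner (A x) (A x)"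
    using assms(1) unfolding adjoint_of_def by metis
  ultimately have "cinner (B x) (B x) \<le> 0" using assms(3) by (simp add: cinner_zero_left)
  then have "cinner (B x) (B x) = 0" using cinner_ge_zero by (metis order_antisym)
  then show ?thesis using cinner_eq_zero_iff by blast
qed

theorem corollary5p7:
  fixes T Tadj :: "'a::chilbert_space \<Rightarrow> 'a"
  assumes "bounded_clinear T"
    and "adjoint_of T Tadj"
    and "kernel Tadj \<subseteq> kernel T"
    and "n > 0"
    and "hyponormal (T ^^ n)"
  shows "\<forall>m>0. kernel (T ^^ m) = kernel (Tadj ^^ m)"
proof -
  have kA: "kernel (Tadj ^^ k) = kernel Tadj" if "k > 0" for k
    using kernel_pow[OF assms(2,3) that] .
  have "kernel (T ^^ n) \<subseteq> kernel (Tadj ^^ n)"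
    using hypo_kernel[OF adj_pow[OF assms(2)] assms(5)] unfolding kernel_def by blast
  moreover have "kernel T \<subseteq> kernel (T ^^ n)"
  proof
    fix x assume "x \<in> kernel T"
    then have "T x = 0" by (simp add: kernel_def)
    obtain j where j: "n = Suc j" using assms(4) gr0_implies_Suc by blast
    have "(T ^^ n) x = (T ^^ j) (T x)" unfolding j by (simp add: funpow_swap1)
    then have "(T ^^ n) x = 0" using \<open>T x = 0\<close> pow_zero[where B=T, OF adj_zero(1)[OF assms(2)]] by simp
    then show "x \<in> kernel (T ^^ n)" by (simp add: kernel_def)
  qed
  ultimately have eq: "kernel T = kernel Tadj" using kA[OF assms(4)] assms(3) by blast
  have kT: "kernel (T ^^ k) = kernel T" if "k > 0" for k
    using kernel_pow[OF adj_swap[OF assms(2)] _ that] eq by simp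
  show ?thesis using kA kT eq by simp
qed

end
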